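(* Let $r\in\mathbb{R}$. For all integers $n,m,k\ge 0$ with $n\ge m+k$, \[ \binom{k+m}{m} S_2(n,m+k) = \sum_{n_1=m}^n \sum_{l=0}^m \sum_{j=0}^k \binom{n_1}{l}\binom{n-n_1}{j}\binom{n}{n_1} (-1)^{l+j} r^{l+j} S_{2,r}(n_1-l,m-l)\, S_{2,r}(n-n_1-j,k-j). \]
   Context: $S_2(n,k)$ denotes the Stirling numbers of the second kind, $\frac{1}{k!}(e^t-1)^k = \sum_{n\ge k} S_2(n,k)\frac{t^n}{n!}$. For $r\in\mathbb{R}$ and integer $k\ge 0$, the extended Stirling numbers of the second kind $S_{2,r}(n,k)$ are defined by $\frac{1}{k!}(e^t-1+rt)^k = \sum_{n=k}^\infty S_{2,r}(n,k)\frac{t^n}{n!}$, with $S_{2,r}(a,b)=0$ whenever $a<b$, and $\binom{a}{b}=0$ for $b>a$. *)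

theory Defs
  imports "HOL-Combinatorics.Stirling" "HOL-Computational_Algebra.Formal_Power_Series"
begin

text \<open>The arguments are integers; the value is 0 if either argument is negative
 (in particular S_{2,r}(a,b) = 0 whenever a < b, which also follows from the
 generating function for a, b >= 0).\<close>

definition ext_stirling2 :: "real \<Rightarrow> int \<Rightarrow> int \<Rightarrow> real" where
  "ext_stirling2 r a b =
     (if a < 0 \<or> b < 0 then 0
      else fact (nat a) / fact (nat b) *
           fps_nth ((fps_exp 1 - 1 + fps_const r * fps_X) ^ nat b) (nat a))"

end

theory Submission
  imports Defs
begin

unbundle fps_syntax

lemma stir_fps:
  "((fps_exp (1::real) - 1)^m) $ n = fact m * real (Stirling n m) / fact n"
proof (induction n arbitrary: m)
  case 0
  then show ?case by (cases m) (simp_all add: fps_nth_power_0)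
next
  case (Suc n)
  show ?case
  proof (cases m)
    case 0
    then show ?thesis by simp
  next
    case (Suc j)
    let ?X = "fps_exp (1::real) - 1"
    have d: "fps_deriv (?X ^ Suc j) = of_nat (Suc j) * (?X ^ Suc j + ?X ^ j)"
    proof -
      have "fps_deriv (?X ^ Suc j) = of_nat (Suc j) * fps_deriv ?X * ?X ^ j"
        by (simp only: fps_deriv_power') simp
      also have "fps_deriv ?X = ?X + 1" by simp
      finally show ?thesis by (simp add: algebra_simps)
    qed
    have "of_nat (n+1) * (?X ^ Suc j) $ (n+1) = of_nat (Suc j) * ((?X ^ Suc j) $ n + (?X ^ j) $ n)"
    proof -
      have "fps_deriv (?X ^ Suc j) $ n = (of_nat (Suc j) * (?X ^ Suc j + ?X ^ j)) $ n"
        using d by (rule arg_cong)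
      then show ?thesis
        by (simp only: fps_deriv_nth fps_mult_of_nat_nth(1) fps_add_nth)
    qed
    also have "\<dots> = of_nat (Suc j) * (fact (Suc j) * real (Stirling n (Suc j)) / fact n
         + fact j * real (Stirling n j) / fact n)" by (simp only: Suc.IH)
    finally have e: "real (n+1) * (?X ^ Suc j) $ (n+1) = of_nat (Suc j) * (fact (Suc j) * real (Stirling n (Suc j)) / fact n
         + fact j * real (Stirling n j) / fact n)" by simp
    have key: "\<And>y::real. real (n+1) * y = of_nat (Suc j) * (fact (Suc j) * real (Stirling n (Suc j)) / fact n
         + fact j * real (Stirling n j) / fact n) \<Longrightarrow>
        y = fact (Suc j) * real (Stirling (Suc n) (Suc j)) / fact (Suc n)"
    proof -
      fix y :: real
      assume h: "real (n+1) * y = of_nat (Suc j) * (fact (Suc j) * real (Stirling n (Suc j)) / fact n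
         + fact j * real (Stirling n j) / fact n)"
      have nz: "fact n + fact n * real n \<noteq> (0::real)"
        by (metis add_0 fact_gt_zero less_irrefl mult_nonneg_nonneg of_nat_0_le_iff add_pos_nonneg fact_ge_zero)
      show "y = fact (Suc j) * real (Stirling (Suc n) (Suc j)) / fact (Suc n)"
        using h nz by (simp add: field_simps fact_Suc)
    qed
    show ?thesis unfolding Suc using key[OF e] by (simp only: Suc_eq_plus1)
  qed
qed

lemma coeff_term:
  fixes a :: real and G :: "real fps"
  shows "(of_nat c * (fps_const a * fps_X) ^ l * G) $ n = (if n < l then 0 else of_nat c * a ^ l * G $ (n - l))"
proof -
  have p: "(fps_const a * fps_X) ^ l = fps_const (a ^ l) * fps_X ^ l"
    by (simp only: power_mult_distrib fps_const_power)
  have o: "(of_nat c :: real fps) = fps_const (of_nat c)"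
    by (rule fps_of_nat[symmetric])
  have eq: "of_nat c * (fps_const a * fps_X) ^ l * G = fps_const (of_nat c * a ^ l) * (fps_X ^ l * G)"
    unfolding p o fps_const_mult[symmetric] by (simp only: mult.assoc)
  show ?thesis unfolding eq fps_mult_left_const_nth fps_X_power_mult_nth by simp
qed

lemma aux_field:
  fixes fn fm fl fa fb s t Y :: real
  assumes "fm \<noteq> 0" "fl \<noteq> 0" "fa \<noteq> 0" "fb \<noteq> 0"
  shows "fn / fm * (fm / (fl * fb) * (s * t) * Y) = fn / (fl * fa) * s * t * (fa / fb * Y)"
  using assms by (simp add: field_simps)

lemma XE_gen: fixes r :: real and Y :: "real fps"
  shows "Y = fps_const (-r) * fps_X + (Y + fps_const r * fps_X)"
proof -
  have h: "fps_const (-r) * fps_X + fps_const r * fps_X = 0"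
    by (simp only: distrib_right[symmetric] fps_const_add) simp
  have "fps_const (-r) * fps_X + (Y + fps_const r * fps_X) = Y + (fps_const (-r) * fps_X + fps_const r * fps_X)"
    by (rule add.left_commute)
  then show ?thesis unfolding h by simp
qed

lemma L1:
  fixes r :: real
  shows "real (Stirling n1 m) = (\<Sum>l=0..m. real (n1 choose l) * (-1)^l * r^l *
     ext_stirling2 r (int n1 - int l) (int m - int l))"
proof -
  define E where "E = fps_exp (1::real) - 1 + fps_const r * fps_X"
  have XE: "fps_exp (1::real) - 1 = fps_const (-r) * fps_X + E"
    unfolding E_def by (rule XE_gen)
  have "((fps_exp (1::real) - 1) ^ m) $ n1 =
     (\<Sum>l\<le>m. (of_nat (m choose l) * (fps_const (-r) * fps_X) ^ l * E ^ (m - l)) $ n1)"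
    unfolding XE binomial_ring by (simp add: fps_sum_nth)
  also have "\<dots> = (\<Sum>l\<le>m. if n1 < l then 0 else of_nat (m choose l) * (-r) ^ l * (E ^ (m - l)) $ (n1 - l))"
    by (simp only: coeff_term)
  finally have h: "fact m * real (Stirling n1 m) / fact n1 =
    (\<Sum>l\<le>m. if n1 < l then 0 else of_nat (m choose l) * (-r) ^ l * (E ^ (m - l)) $ (n1 - l))"
    by (simp only: stir_fps)
  have "real (Stirling n1 m) = fact n1 / fact m * (fact m * real (Stirling n1 m) / fact n1)"
    by simp
  also have "\<dots> = (\<Sum>l\<le>m. fact n1 / fact m * (if n1 < l then 0 else of_nat (m choose l) * (-r) ^ l * (E ^ (m - l)) $ (n1 - l)))"
    unfolding h by (simp add: sum_distrib_left)
  also have "\<dots> = (\<Sum>l\<le>m. real (n1 choose l) * (-1)^l * r^l *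
     ext_stirling2 r (int n1 - int l) (int m - int l))"
  proof (rule sum.cong[OF refl])
    fix l assume l: "l \<in> {..m}"
    show "fact n1 / fact m * (if n1 < l then 0 else of_nat (m choose l) * (-r) ^ l * (E ^ (m - l)) $ (n1 - l)) =
      real (n1 choose l) * (-1)^l * r^l * ext_stirling2 r (int n1 - int l) (int m - int l)"
    proof (cases "n1 < l")
      case True
      then show ?thesis by simp
    next
      case False
      have ext: "ext_stirling2 r (int n1 - int l) (int m - int l) = fact (n1 - l) / fact (m - l) * (E ^ (m - l)) $ (n1 - l)"
      proof -
        have c1: "\<not> (int n1 - int l < 0 \<or> int m - int l < 0)" using False l by auto
        have d1: "nat (int n1 - int l) = n1 - l" using False by simp
        have d2: "nat (int m - int l) = m - l" using l by simp
        show ?thesis unfolding ext_stirling2_def E_def[symmetric] d1 d2 using c1 by (simp only: if_False)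
      qed
      have b1: "real (m choose l) = fact m / (fact l * fact (m - l))" using l by (simp add: binomial_fact)
      have b2: "real (n1 choose l) = fact n1 / (fact l * fact (n1 - l))" using False by (simp add: binomial_fact)
      show ?thesis unfolding ext b1 b2 power_minus[of r l] if_not_P[OF False]
        by (rule aux_field) simp_all
    qed
  qed
  finally show ?thesis by (simp add: atLeast0AtMost)
qed

lemma L2:
  "real ((k + m) choose m) * real (Stirling n (m + k)) =
   (\<Sum>i=0..n. real (n choose i) * real (Stirling i m) * real (Stirling (n - i) k))"
proof -
  let ?X = "fps_exp (1::real) - 1"
  have "(?X ^ (m + k)) $ n = (?X ^ m * ?X ^ k) $ n" by (simp only: power_add)
  hence h: "fact (m + k) * real (Stirling n (m + k)) / fact n =
     (\<Sum>i=0..n. (fact m * real (Stirling i m) / fact i) * (fact k * real (Stirling (n - i) k) / fact (n - i)))"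
    by (simp only: fps_mult_nth stir_fps)
  have b: "real ((k + m) choose m) = fact (m + k) / (fact m * fact k)"
    by (simp add: binomial_fact add.commute)
  have "real ((k + m) choose m) * real (Stirling n (m + k)) =
     fact n / (fact m * fact k) * (fact (m + k) * real (Stirling n (m + k)) / fact n)"
    unfolding b by (simp add: field_simps)
  also have "\<dots> = (\<Sum>i=0..n. fact n / (fact m * fact k) * ((fact m * real (Stirling i m) / fact i) * (fact k * real (Stirling (n - i) k) / fact (n - i))))"
    unfolding h by (simp add: sum_distrib_left)
  also have "\<dots> = (\<Sum>i=0..n. real (n choose i) * real (Stirling i m) * real (Stirling (n - i) k))"
  proof (rule sum.cong[OF refl])
    fix i assume "i \<in> {0..n}"
    hence "real (n choose i) = fact n / (fact i * fact (n - i))" by (simp add: binomial_fact)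
    thus "fact n / (fact m * fact k) * ((fact m * real (Stirling i m) / fact i) * (fact k * real (Stirling (n - i) k) / fact (n - i))) =
      real (n choose i) * real (Stirling i m) * real (Stirling (n - i) k)"
      by (simp add: field_simps)
  qed
  finally show ?thesis .
qed

theorem mainTheorem7:
  fixes r :: real and n m k :: nat
  assumes "n \<ge> m + k"
  shows "real ((k + m) choose m) * real (Stirling n (m + k)) =
    (\<Sum>n1 = m..n. \<Sum>l = 0..m. \<Sum>j = 0..k.
       real (n1 choose l) * real ((n - n1) choose j) * real (n choose n1) *
       (-1) ^ (l + j) * r ^ (l + j) *
       ext_stirling2 r (int n1 - int l) (int m - int l) *
       ext_stirling2 r (int n - int n1 - int j) (int k - int j))"
proof -
  have mn: "m \<le> n" using assms by simp
  have "real ((k + m) choose m) * real (Stirling n (m + k)) =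
   (\<Sum>i=0..n. real (n choose i) * real (Stirling i m) * real (Stirling (n - i) k))"
    by (rule L2)
  also have "\<dots> = (\<Sum>i=m..n. real (n choose i) * real (Stirling i m) * real (Stirling (n - i) k))"
  proof -
    have u: "{0..n} = {0..<m} \<union> {m..n}" using mn by auto
    have "(\<Sum>i=0..n. real (n choose i) * real (Stirling i m) * real (Stirling (n - i) k)) =
      (\<Sum>i=0..<m. real (n choose i) * real (Stirling i m) * real (Stirling (n - i) k)) +
      (\<Sum>i=m..n. real (n choose i) * real (Stirling i m) * real (Stirling (n - i) k))"
      unfolding u by (rule sum.union_disjoint) auto
    moreover have "(\<Sum>i=0..<m. real (n choose i) * real (Stirling i m) * real (Stirling (n - i) k)) = 0"
      by (rule sum.neutral) simp
    ultimately show ?thesis by simp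
  qed
  also have "\<dots> = (\<Sum>n1 = m..n. \<Sum>l = 0..m. \<Sum>j = 0..k.
       real (n1 choose l) * real ((n - n1) choose j) * real (n choose n1) *
       (-1) ^ (l + j) * r ^ (l + j) *
       ext_stirling2 r (int n1 - int l) (int m - int l) *
       ext_stirling2 r (int n - int n1 - int j) (int k - int j))"
  proof (rule sum.cong[OF refl])
    fix n1 assume "n1 \<in> {m..n}"
    hence n1: "n1 \<le> n" by simp
    have i: "int n - int n1 = int (n - n1)" using n1 by simp
    show "real (n choose n1) * real (Stirling n1 m) * real (Stirling (n - n1) k) =
      (\<Sum>l = 0..m. \<Sum>j = 0..k.
       real (n1 choose l) * real ((n - n1) choose j) * real (n choose n1) *
       (-1) ^ (l + j) * r ^ (l + j) *
       ext_stirling2 r (int n1 - int l) (int m - int l) *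
       ext_stirling2 r (int n - int n1 - int j) (int k - int j))"
    proof -
      let ?c = "real (n choose n1)"
      let ?f = "\<lambda>l. real (n1 choose l) * (- 1) ^ l * r ^ l * ext_stirling2 r (int n1 - int l) (int m - int l)"
      let ?g = "\<lambda>j. real (n - n1 choose j) * (- 1) ^ j * r ^ j * ext_stirling2 r (int (n - n1) - int j) (int k - int j)"
      have "?c * sum ?f {0..m} * sum ?g {0..k} = ?c * (sum ?f {0..m} * sum ?g {0..k})"
        by (rule mult.assoc)
      also have "\<dots> = ?c * (\<Sum>l=0..m. \<Sum>j=0..k. ?f l * ?g j)"
        by (simp only: sum_product)
      also have "\<dots> = (\<Sum>l=0..m. \<Sum>j=0..k. ?c * (?f l * ?g j))"
        by (simp only: sum_distrib_left)
      also have "\<dots> = (\<Sum>l = 0..m. \<Sum>j = 0..k.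
         real (n1 choose l) * real (n - n1 choose j) * real (n choose n1) * (- 1) ^ (l + j) * r ^ (l + j) *
         ext_stirling2 r (int n1 - int l) (int m - int l) * ext_stirling2 r (int (n - n1) - int j) (int k - int j))"
      proof (rule sum.cong[OF refl], rule sum.cong[OF refl])
        fix l j
        show "?c * (?f l * ?g j) =
         real (n1 choose l) * real (n - n1 choose j) * real (n choose n1) * (- 1) ^ (l + j) * r ^ (l + j) *
         ext_stirling2 r (int n1 - int l) (int m - int l) * ext_stirling2 r (int (n - n1) - int j) (int k - int j)"
          unfolding power_add by (simp only: mult_ac)
      qed
      finally have X: "?c * sum ?f {0..m} * sum ?g {0..k} = (\<Sum>l = 0..m. \<Sum>j = 0..k.
         real (n1 choose l) * real (n - n1 choose j) * real (n choose n1) * (- 1) ^ (l + j) * r ^ (l + j) *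
         ext_stirling2 r (int n1 - int l) (int m - int l) * ext_stirling2 r (int (n - n1) - int j) (int k - int j))" .
      show ?thesis unfolding L1[of n1 m r] L1[of "n - n1" k r] i by (rule X)
    qed
  qed
  finally show ?thesis .
qed

end
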